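(* Let $n,r\geq1$, $\epsilon>0$, and let $t\mapsto(x_1(t),\ldots,x_r(t))$ be a continuous map $[0,\epsilon)\to(\mathbb R^n)^r$. For $I\subseteq\{1,\ldots,r\}$ and $t\in[0,\epsilon)$, let $F_I(t)$ be the convex hull of $\{x_i(t): i\in I\}$, and $P(t)=F_{\{1,\ldots,r\}}(t)$. Assume that for every $t\in(0,\epsilon)$ the points $x_i(t)$ are pairwise distinct vertices of $P(t)$, and that whenever $F_I(t)$ is a face of $P(t)$ of dimension $k$ for some $t\in(0,\epsilon)$, then $F_I(t)$ is a face of $P(t)$ of dimension $k$ for all $t\in(0,\epsilon)$. Let $I$ be such that $F(t):=F_I(t)$ is a face of $P(t)$ for all $t\in(0,\epsilon)$. Then every proper face of $F(0)$ is contained in the union of the sets $F_K(0)$, over all $K$ such that $F_K(t)$ is a proper face of $F(t)$ for $t\in(0,\epsilon)$. *)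

theory Defs
  imports "HOL-Analysis.Analysis"
begin

definition hullF :: "(real \<Rightarrow> nat \<Rightarrow> 'a::euclidean_space) \<Rightarrow> nat set \<Rightarrow> real \<Rightarrow> 'a set" where
  "hullF x I t = convex hull (x t ` I)"

end

theory Submission
  imports Defs
begin

theorem lemma6p1:
  fixes x :: "real \<Rightarrow> nat \<Rightarrow> 'a::euclidean_space"
    and r :: nat and \<epsilon> :: real and I :: "nat set"
  assumes r: "r \<ge> 1"
    and eps: "\<epsilon> > 0"
    and cont: "\<And>i. i \<in> {1..r} \<Longrightarrow> continuous_on {0..<\<epsilon>} (\<lambda>t. x t i)"
    and distinct: "\<And>t. t \<in> {0<..<\<epsilon>} \<Longrightarrow> inj_on (x t) {1..r}"
    and vertices: "\<And>t i. t \<in> {0<..<\<epsilon>} \<Longrightarrow> i \<in> {1..r} \<Longrightarrow>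
                     x t i extreme_point_of hullF x {1..r} t"
    and stable: "\<And>J t s. J \<subseteq> {1..r} \<Longrightarrow> t \<in> {0<..<\<epsilon>} \<Longrightarrow> s \<in> {0<..<\<epsilon>} \<Longrightarrow>
                   hullF x J t face_of hullF x {1..r} t \<Longrightarrow>
                   hullF x J s face_of hullF x {1..r} s \<and>
                   aff_dim (hullF x J s) = aff_dim (hullF x J t)"
    and I: "I \<subseteq> {1..r}"
    and Iface: "\<And>t. t \<in> {0<..<\<epsilon>} \<Longrightarrow> hullF x I t face_of hullF x {1..r} t"
  shows "\<forall>G. G face_of hullF x I 0 \<and> G \<noteq> hullF x I 0 \<longrightarrow>
           G \<subseteq> \<Union> {hullF x K 0 | K. K \<subseteq> {1..r} \<and>
                  (\<forall>t \<in> {0<..<\<epsilon>}. hullF x K t face_of hullF x I t \<and> hullF x K t \<noteq> hullF x I t)}"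
proof (intro allI impI)
  fix G assume G: "G face_of hullF x I 0 \<and> G \<noteq> hullF x I 0"
  define KK where "KK = {K. K \<subseteq> {1..r} \<and> (\<forall>t \<in> {0<..<\<epsilon>}. hullF x K t face_of hullF x I t \<and> hullF x K t \<noteq> hullF x I t)}"
  define U where "U = \<Union> {hullF x K 0 | K. K \<in> KK}"
  have U_eq: "\<Union> {hullF x K 0 | K. K \<subseteq> {1..r} \<and> (\<forall>t \<in> {0<..<\<epsilon>}. hullF x K t face_of hullF x I t \<and> hullF x K t \<noteq> hullF x I t)} = U"
    unfolding U_def KK_def by simp
  have finI: "finite I" using I finite_subset by blast
  have finKK: "finite KK" unfolding KK_def by (rule finite_subset[of _ "Pow {1..r}"]) auto
  have closedU: "closed U"
    unfolding U_def
  proof (rule closed_Union)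
    have "{hullF x K 0 | K. K \<in> KK} = (\<lambda>K. hullF x K 0) ` KK" by auto
    then show "finite {hullF x K 0 | K. K \<in> KK}" using finKK by simp
    show "\<forall>S\<in>{hullF x K 0 | K. K \<in> KK}. closed S"
    proof clarify
      fix K assume "K \<in> KK"
      then have "finite K" unfolding KK_def using finite_subset by blast
      then show "closed (hullF x K 0)" unfolding hullF_def
        by (intro compact_imp_closed compact_convex_hull finite_imp_compact) simp
    qed
  qed
  show "G \<subseteq> \<Union> {hullF x K 0 | K. K \<subseteq> {1..r} \<and>
                  (\<forall>t \<in> {0<..<\<epsilon>}. hullF x K t face_of hullF x I t \<and> hullF x K t \<noteq> hullF x I t)}"
    unfolding U_eq
  proof
    fix y assume yG: "y \<in> G"
    show "y \<in> U"
    proof (rule ccontr)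
      assume yU: "y \<notin> U"
      have "open (- U)" using closedU by (simp add: open_Compl)
      then obtain \<delta> where dpos: "\<delta> > 0" and dball: "ball y \<delta> \<subseteq> - U"
        using yU open_contains_ball by blast
      define F0 where "F0 = hullF x I 0"
      have polyF0: "polyhedron F0" unfolding F0_def hullF_def using finI
        by (simp add: polytope_imp_polyhedron polytope_convex_hull)
      have "G exposed_face_of F0" using G exposed_face_of_polyhedron[OF polyF0] F0_def by simp
      then obtain c b where cb: "F0 \<subseteq> {v. c \<bullet> v \<le> b}" and Geq: "G = F0 \<inter> {v. c \<bullet> v = b}"
        unfolding exposed_face_of_def by blast
      have yF0: "y \<in> F0" and cy: "c \<bullet> y = b" using yG Geq by auto
      have xF0: "x 0 i \<in> F0" if "i \<in> I" for i
        unfolding F0_def hullF_def using that by (simp add: hull_inc)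
      have "\<exists>k\<in>I. c \<bullet> x 0 k < b"
      proof (rule ccontr)
        assume "\<not> (\<exists>k\<in>I. c \<bullet> x 0 k < b)"
        then have "x 0 ` I \<subseteq> {v. c \<bullet> v = b}" using xF0 cb by fastforce
        then have "F0 \<subseteq> {v. c \<bullet> v = b}" unfolding F0_def hullF_def
          by (rule hull_minimal) (simp add: convex_hyperplane)
        then have "G = F0" using Geq by blast
        then show False using G F0_def by simp
      qed
      then obtain k where kI: "k \<in> I" and ck: "c \<bullet> x 0 k < b" by blast
      have kr: "k \<in> {1..r}" using kI I by blast
      define V where "V = x 0 ` I"
      have finV: "finite V" using finI V_def by simp
      obtain u where u0: "\<forall>v\<in>V. 0 \<le> u v" and u1: "sum u V = 1" and uy: "(\<Sum>v\<in>V. u v *\<^sub>R v) = y"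
        using yF0 convex_hull_finite[OF finV] unfolding F0_def hullF_def V_def by auto
      define g where "g = inv_into I (x 0)"
      have gI: "\<And>v. v \<in> V \<Longrightarrow> g v \<in> I" unfolding g_def V_def by (auto intro: inv_into_into)
      have xg: "\<And>v. v \<in> V \<Longrightarrow> x 0 (g v) = v" unfolding g_def V_def by (auto intro: f_inv_into_f)
      define z where "z = (\<lambda>t. \<Sum>v\<in>V. u v *\<^sub>R x t (g v))"
      have z0: "(\<Sum>v\<in>V. u v *\<^sub>R x 0 (g v)) = y" using uy xg by (metis (no_types, lifting) sum.cong)
      have zF: "z t \<in> hullF x I t" for t
        unfolding z_def hullF_def
        by (rule convex_sum[OF finV convex_convex_hull]) (auto simp: u0 u1 gI hull_inc)
      define FL where "FL = at (0::real) within {0<..<\<epsilon>}"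
      have FLnt: "FL \<noteq> bot" unfolding FL_def
        using trivial_limit_within islimpt_greaterThanLessThan1[OF eps] by auto
      have ev_in: "eventually (\<lambda>t. t \<in> {0<..<\<epsilon>}) FL" unfolding FL_def
        by (simp add: eventually_at_filter)
      have limx: "((\<lambda>t. x t i) \<longlongrightarrow> x 0 i) FL" if "i \<in> {1..r}" for i
      proof -
        have "((\<lambda>t. x t i) \<longlongrightarrow> x 0 i) (at 0 within {0..<\<epsilon>})"
          using cont[OF that] eps unfolding continuous_on_def by auto
        then show ?thesis unfolding FL_def by (rule tendsto_within_subset) auto
      qed
      have limz: "(z \<longlongrightarrow> y) FL"
      proof -
        have "(z \<longlongrightarrow> (\<Sum>v\<in>V. u v *\<^sub>R x 0 (g v))) FL"
          unfolding z_def using gI I by (intro tendsto_sum tendsto_scaleR tendsto_const limx) blast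
        then show ?thesis using z0 by simp
      qed
      define \<eta> where "\<eta> = b - c \<bullet> x 0 k"
      have etapos: "\<eta> > 0" using ck \<eta>_def by simp
      define D where "D = norm (y - x 0 k) + 1"
      have Dpos: "D > 0" unfolding D_def by (simp add: add_nonneg_pos)
      define s where "s = \<delta> / (4 * D)"
      have spos: "s > 0" unfolding s_def using dpos Dpos by simp
      have sD: "s * D = \<delta> / 4" unfolding s_def using Dpos by simp
      have E2: "eventually (\<lambda>t. dist (z t) y < \<delta>/4) FL"
        using limz dpos by (intro tendstoD) auto
      have E3: "eventually (\<lambda>t. dist (z t - x t k) (y - x 0 k) < 1) FL"
        by (rule tendstoD[OF tendsto_diff[OF limz limx[OF kr]]]) simp
      have E4: "eventually (\<lambda>t. \<forall>i\<in>I. c \<bullet> x t i < b + s*\<eta>/2) FL"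
      proof (rule eventually_ball_finite[OF finI], rule ballI)
        fix i assume iI: "i \<in> I"
        have "c \<bullet> x 0 i \<le> b" using xF0[OF iI] cb by blast
        moreover have "s * \<eta> > 0" using spos etapos by simp
        ultimately have "c \<bullet> x 0 i < b + s*\<eta>/2" by linarith
        then show "eventually (\<lambda>t. c \<bullet> x t i < b + s*\<eta>/2) FL"
          using iI I by (intro order_tendstoD(2)[OF tendsto_inner[OF tendsto_const limx]]) auto
      qed
      have E5: "eventually (\<lambda>t. b + s*\<eta>/2 < c \<bullet> (z t + s *\<^sub>R (z t - x t k))) FL"
      proof (rule order_tendstoD(1))
        show "((\<lambda>t. c \<bullet> (z t + s *\<^sub>R (z t - x t k))) \<longlongrightarrow> c \<bullet> (y + s *\<^sub>R (y - x 0 k))) FL"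
          by (intro tendsto_inner tendsto_const tendsto_add tendsto_scaleR tendsto_diff limz limx kr)
        have "c \<bullet> (y + s *\<^sub>R (y - x 0 k)) = b + s * \<eta>"
          using cy by (simp add: \<eta>_def inner_add_right inner_diff_right)
        then show "b + s*\<eta>/2 < c \<bullet> (y + s *\<^sub>R (y - x 0 k))" using spos etapos by simp
      qed
      have E6: "eventually (\<lambda>t. \<forall>i\<in>I. dist (x t i) (x 0 i) < \<delta>/4) FL"
        using I dpos by (intro eventually_ball_finite[OF finI] ballI tendstoD limx) auto
      have "eventually (\<lambda>t. t \<in> {0<..<\<epsilon>} \<and> dist (z t) y < \<delta>/4 \<and> dist (z t - x t k) (y - x 0 k) < 1
          \<and> (\<forall>i\<in>I. c \<bullet> x t i < b + s*\<eta>/2) \<and> b + s*\<eta>/2 < c \<bullet> (z t + s *\<^sub>R (z t - x t k))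
          \<and> (\<forall>i\<in>I. dist (x t i) (x 0 i) < \<delta>/4)) FL"
        using ev_in E2 E3 E4 E5 E6 by (intro eventually_conj)
      then obtain t where t: "t \<in> {0<..<\<epsilon>}" and t2: "dist (z t) y < \<delta>/4"
        and t3: "dist (z t - x t k) (y - x 0 k) < 1"
        and t4: "\<forall>i\<in>I. c \<bullet> x t i < b + s*\<eta>/2" and t5: "b + s*\<eta>/2 < c \<bullet> (z t + s *\<^sub>R (z t - x t k))"
        and t6: "\<forall>i\<in>I. dist (x t i) (x 0 i) < \<delta>/4"
        using eventually_happens'[OF FLnt] by blast
      define p where "p = z t + s *\<^sub>R (z t - x t k)"
      define Ft where "Ft = hullF x I t"
      have "Ft \<subseteq> {v. c \<bullet> v < b + s*\<eta>/2}" unfolding Ft_def hullF_def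
        by (rule hull_minimal) (use t4 in \<open>auto simp: convex_halfspace_lt\<close>)
      then have pnot: "p \<notin> Ft" using t5 p_def by auto
      have zt: "z t \<in> Ft" using zF Ft_def by simp
      have xk: "x t k \<in> Ft" unfolding Ft_def hullF_def using kI by (simp add: hull_inc)
      have "p = (1 + s) *\<^sub>R z t + (- s) *\<^sub>R x t k" unfolding p_def by (simp add: algebra_simps)
      moreover have "(1 + s) *\<^sub>R z t + (- s) *\<^sub>R x t k \<in> affine hull Ft"
        using zt xk by (intro mem_affine[OF affine_affine_hull]) (auto simp: hull_inc)
      ultimately have paff: "p \<in> affine hull Ft - rel_interior Ft"
        using pnot rel_interior_subset by auto
      have compFt: "compact Ft" unfolding Ft_def hullF_def using finI
        by (intro compact_convex_hull finite_imp_compact) simp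
      define q where "q = closest_point Ft p"
      have qrf: "q \<in> rel_frontier Ft" unfolding q_def
        using closest_point_in_rel_frontier[OF compact_imp_closed[OF compFt] _ paff] zt by auto
      have "dist p q \<le> dist p (z t)" unfolding q_def
        by (rule closest_point_le[OF compact_imp_closed[OF compFt] zt])
      moreover have "dist p (z t) = s * norm (z t - x t k)" unfolding p_def using spos
        by (simp add: dist_norm)
      moreover have "norm (z t - x t k) < D"
      proof -
        have "norm (z t - x t k) \<le> norm (y - x 0 k) + dist (z t - x t k) (y - x 0 k)"
          by (metis dist_norm norm_triangle_sub)
        then show ?thesis using t3 D_def by simp
      qed
      ultimately have dpz: "dist p (z t) < \<delta>/4" using spos sD
        by (metis mult_strict_left_mono)
      then have dpq: "dist p q < \<delta>/4" using \<open>dist p q \<le> dist p (z t)\<close> by linarith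
      have dqy: "dist q y < 3 * \<delta> / 4"
      proof -
        have "dist q y \<le> dist q p + dist p (z t) + dist (z t) y"
          by (metis add_left_mono dist_triangle order_trans add.assoc)
        then show ?thesis using dpz dpq t2 by (simp add: dist_commute)
      qed
      have polyFt: "polyhedron Ft" unfolding Ft_def hullF_def using finI
        by (simp add: polytope_imp_polyhedron polytope_convex_hull)
      obtain H where HF: "H face_of Ft" and HneF: "H \<noteq> Ft" and qH: "q \<in> H"
        using qrf rel_frontier_of_polyhedron_alt[OF polyFt] by blast
      obtain S' where S'sub: "S' \<subseteq> x t ` I" and HS': "H = convex hull S'"
        using face_of_convex_hull_subset[of "x t ` I" H] finI HF
        unfolding Ft_def hullF_def by (metis finite_imageI finite_imp_compact)
      define K where "K = {i\<in>I. x t i \<in> S'}"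
      have KI: "K \<subseteq> I" unfolding K_def by blast
      have "x t ` K = S'" unfolding K_def using S'sub by blast
      then have HK: "H = hullF x K t" unfolding hullF_def HS' by simp
      have Kr: "K \<subseteq> {1..r}" using KI I by blast
      have convF: "convex (hullF x I t')" for t' unfolding hullF_def by simp
      have KKK: "K \<in> KK"
        unfolding KK_def
      proof (intro CollectI conjI Kr ballI)
        fix t' assume t': "t' \<in> {0<..<\<epsilon>}"
        have "hullF x K t face_of hullF x {1..r} t"
          using face_of_trans[OF HF[unfolded HK Ft_def] Iface[OF t]] .
        from stable[OF Kr t t' this]
        have Kt': "hullF x K t' face_of hullF x {1..r} t'" and adK: "aff_dim (hullF x K t') = aff_dim (hullF x K t)"
          by auto
        have adI: "aff_dim (hullF x I t') = aff_dim (hullF x I t)"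
          using stable[OF I t t' Iface[OF t]] by auto
        have sub1: "hullF x K t' \<subseteq> hullF x I t'" unfolding hullF_def using KI by (intro hull_mono) blast
        have sub2: "hullF x I t' \<subseteq> hullF x {1..r} t'" unfolding hullF_def using I by (intro hull_mono) blast
        show "hullF x K t' face_of hullF x I t'" using face_of_subset[OF Kt' sub1 sub2] .
        have "aff_dim (hullF x K t) < aff_dim (hullF x I t)"
          using face_of_aff_dim_lt[OF convF HF[unfolded HK Ft_def] HneF[unfolded HK Ft_def]] .
        then show "hullF x K t' \<noteq> hullF x I t'" using adK adI by auto
      qed
      define Th where "Th = (\<Union>a\<in>hullF x K 0. \<Union>w\<in>cball 0 (\<delta>/4). {a + w})"
      have "H \<subseteq> Th" unfolding HK hullF_def
      proof (rule hull_minimal)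
        show "convex Th" unfolding Th_def hullF_def by (intro convex_sums convex_convex_hull convex_cball)
        show "x t ` K \<subseteq> Th"
        proof
          fix v assume "v \<in> x t ` K"
          then obtain i where iK: "i \<in> K" and v: "v = x t i" by blast
          have "x 0 i \<in> hullF x K 0" unfolding hullF_def using iK by (simp add: hull_inc)
          moreover have "x t i - x 0 i \<in> cball 0 (\<delta>/4)"
            using t6 iK KI by (auto simp: dist_norm norm_minus_commute less_imp_le)
          moreover have "v = x 0 i + (x t i - x 0 i)" using v by simp
          ultimately show "v \<in> Th" unfolding Th_def by blast
        qed
      qed
      then obtain a w where aK: "a \<in> hullF x K 0" and w: "w \<in> cball 0 (\<delta>/4)" and qaw: "q = a + w"
        using qH unfolding Th_def by blast
      have "dist a y \<le> dist q y + norm w" unfolding qaw dist_norm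
        by (metis add_diff_cancel_right' diff_add_eq norm_triangle_ineq4)
      moreover have "norm w \<le> \<delta>/4" using w by simp
      ultimately have "dist a y < \<delta>" using dqy by linarith
      then have "a \<in> ball y \<delta>" by (simp add: dist_commute)
      moreover have "a \<in> U" unfolding U_def using aK KKK by blast
      ultimately show False using dball by blast
    qed
  qed
qed

end
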